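(* Let $\Omega\subset\mathbb{R}^d$ ($d=2,3$) be a bounded domain, $H=L_2(\Omega)$ with inner product $(u,v)=\int_\Omega u v\,dx$ and norm $\|u\|=(u,u)^{1/2}$, and $\boldsymbol H=(L_2(\Omega))^d$. Let $\mu,\lambda,\alpha,k,\nu$ be constants and $S\ge 0$ a constant. Consider the operators $$\mathcal{A}\boldsymbol v=-\mu\nabla^2\boldsymbol v-(\lambda+\mu)\,\mathrm{grad}\,\mathrm{div}\,\boldsymbol v \ \text{ in } \boldsymbol H,\qquad \mathcal{B}p=-\mathrm{div}\Big(\frac{k}{\nu}\,\mathrm{grad}\,p\Big)\ \text{ in } H,$$ where $\mathcal{A}$ is self-adjoint and nonnegative in $\boldsymbol H$ and $\mathcal{B}$ is self-adjoint and positive in $H$, and let $\mathcal{G}$ (gradient) and $\mathcal{D}$ (divergence) satisfy $(\mathcal{G}p,\boldsymbol u)=-(\mathcal{D}\boldsymbol u,p)$ for all $p,\boldsymbol u$. Let $(\boldsymbol u(t),p(t))$ be a solution of $$\mathcal{A}\boldsymbol u+\alpha\mathcal{G}p=0,\qquad \frac{d}{dt}\big(S\,p+\alpha\mathcal{D}\boldsymbol u\big)+\mathcal{B}p=f(t),\quad t>0,$$ with $p(0)=p_0$. Then for all $t>0$, $$\|\boldsymbol u(t)\|_{\mathcal{A}}^2+S\|p(t)\|^2\le \|\boldsymbol u(0)\|_{\mathcal{A}}^2+S\|p(0)\|^2+\frac12\int_0^t\|f(s)\|^2_{\mathcal{B}^{-1}}\,ds.$$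
   Context: This is the operator form of the linear poroelasticity (Biot) system: $\boldsymbol u$ is the displacement, $p$ the fluid pressure, $S=1/M$ with $M$ the Biot modulus, $k$ the permeability, $\nu$ the fluid viscosity, $\alpha$ the Biot–Willis coupling coefficient, $f$ a source term. The operators act on functions satisfying the homogeneous boundary conditions of the problem. Norms: $\|\boldsymbol u\|_{\mathcal{A}}=(\mathcal{A}\boldsymbol u,\boldsymbol u)^{1/2}$, $\|f\|_{\mathcal{B}^{-1}}=(\mathcal{B}^{-1}f,f)^{1/2}$. *)

theory Defs
  imports "HOL-Analysis.Analysis"
begin

definition linear_op_on :: "'a::real_vector set \<Rightarrow> ('a \<Rightarrow> 'b::real_vector) \<Rightarrow> bool" where
  "linear_op_on X T \<longleftrightarrow> subspace X \<and>
     (\<forall>x\<in>X. \<forall>y\<in>X. T (x + y) = T x + T y) \<and>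
     (\<forall>c. \<forall>x\<in>X. T (c *\<^sub>R x) = c *\<^sub>R T x)"

text \<open>Self-adjoint: densely defined, linear, and equal to its Hilbert adjoint
  (the adjoint's domain is {y. exists z. for all x in X, (T x, y) = (x, z)}).\<close>

definition selfadjoint_on :: "'a::real_inner set \<Rightarrow> ('a \<Rightarrow> 'a) \<Rightarrow> bool" where
  "selfadjoint_on X T \<longleftrightarrow> linear_op_on X T \<and> closure X = UNIV \<and>
     (\<forall>x\<in>X. \<forall>y\<in>X. inner (T x) y = inner x (T y)) \<and>
     (\<forall>y z. (\<forall>x\<in>X. inner (T x) y = inner x z) \<longrightarrow> y \<in> X \<and> T y = z)"

definition nonneg_on :: "'a::real_inner set \<Rightarrow> ('a \<Rightarrow> 'a) \<Rightarrow> bool" where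
  "nonneg_on X T \<longleftrightarrow> (\<forall>x\<in>X. inner (T x) x \<ge> 0)"

definition positive_on :: "'a::real_inner set \<Rightarrow> ('a \<Rightarrow> 'a) \<Rightarrow> bool" where
  "positive_on X T \<longleftrightarrow> (\<forall>x\<in>X. x \<noteq> 0 \<longrightarrow> inner (T x) x > 0)"

definition op_norm :: "('a::real_inner \<Rightarrow> 'a) \<Rightarrow> 'a \<Rightarrow> real" where
  "op_norm T u = sqrt (inner (T u) u)"

definition op_inv :: "'a set \<Rightarrow> ('a \<Rightarrow> 'b) \<Rightarrow> 'b \<Rightarrow> 'a" where
  "op_inv X T f = (THE x. x \<in> X \<and> T x = f)"

definition inv_norm :: "'a::real_inner set \<Rightarrow> ('a \<Rightarrow> 'a) \<Rightarrow> 'a \<Rightarrow> real" where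
  "inv_norm X T f = sqrt (inner (op_inv X T f) f)"

end

theory Submission
  imports Defs
begin

lemma hvd_cmul:
  "(g has_vector_derivative g') F \<Longrightarrow> ((\<lambda>x. c *\<^sub>R g x) has_vector_derivative (c *\<^sub>R g')) F"
  unfolding has_vector_derivative_def
  by (drule has_derivative_scaleR_right[where r=c]) (simp add: mult.commute)

theorem theorem1:
  fixes domA :: "'v::{real_inner,complete_space} set" and A :: "'v \<Rightarrow> 'v"
    and domB :: "'h::{real_inner,complete_space} set" and B :: "'h \<Rightarrow> 'h"
    and domG :: "'h set" and G :: "'h \<Rightarrow> 'v"
    and domD :: "'v set" and D :: "'v \<Rightarrow> 'h"
    and S \<alpha> :: real
    and u u' :: "real \<Rightarrow> 'v" and p p' f :: "real \<Rightarrow> 'h" and p0 :: 'h and t :: real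
  assumes A_sa: "selfadjoint_on domA A" and A_nonneg: "nonneg_on domA A"
    and B_sa: "selfadjoint_on domB B" and B_pos: "positive_on domB B"
    and B_onto: "\<forall>g. \<exists>x\<in>domB. B x = g"
    and G_lin: "linear_op_on domG G" and D_lin: "linear_op_on domD D"
    and GD_adj: "\<forall>q\<in>domG. \<forall>w\<in>domD. inner (G q) w = - inner (D w) q"
    and S_nonneg: "S \<ge> 0"
    \<comment> \<open>the solution takes values in the operator domains\<close>
    and u_dom: "\<forall>s\<ge>0. u s \<in> domA \<inter> domD"
    and p_dom: "\<forall>s\<ge>0. p s \<in> domB \<inter> domG"
    \<comment> \<open>regularity of the solution\<close>
    and u_cont: "continuous_on {0..} u" and Au_cont: "continuous_on {0..} (\<lambda>s. A (u s))"
    and p_cont: "continuous_on {0..} p"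
    and u'_dom: "\<forall>s>0. u' s \<in> domA \<inter> domD"
    and u_deriv: "\<forall>s>0. (u has_vector_derivative u' s) (at s)"
    and Au_deriv: "\<forall>s>0. ((\<lambda>r. A (u r)) has_vector_derivative A (u' s)) (at s)"
    and Du_deriv: "\<forall>s>0. ((\<lambda>r. D (u r)) has_vector_derivative D (u' s)) (at s)"
    and p_deriv: "\<forall>s>0. (p has_vector_derivative p' s) (at s)"
    \<comment> \<open>the system\<close>
    and eq1: "\<forall>s>0. A (u s) + \<alpha> *\<^sub>R G (p s) = 0"
    and eq2: "\<forall>s>0. ((\<lambda>r. S *\<^sub>R p r + \<alpha> *\<^sub>R D (u r)) has_vector_derivative (f s - B (p s))) (at s)"
    and init: "p 0 = p0"
    and f_int: "(\<lambda>s. (inv_norm domB B (f s))\<^sup>2) integrable_on {0..t}"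
    and t_pos: "t > 0"
  shows "(op_norm A (u t))\<^sup>2 + S * (norm (p t))\<^sup>2
           \<le> (op_norm A (u 0))\<^sup>2 + S * (norm (p 0))\<^sup>2
              + 1/2 * integral {0..t} (\<lambda>s. (inv_norm domB B (f s))\<^sup>2)"
proof -
  have Bsym: "\<And>x y. x \<in> domB \<Longrightarrow> y \<in> domB \<Longrightarrow> inner (B x) y = inner x (B y)"
    using B_sa unfolding selfadjoint_on_def by blast
  have Asym: "\<And>x y. x \<in> domA \<Longrightarrow> y \<in> domA \<Longrightarrow> inner (A x) y = inner x (A y)"
    using A_sa unfolding selfadjoint_on_def by blast
  have Blin: "linear_op_on domB B" using B_sa unfolding selfadjoint_on_def by blast
  have subB: "subspace domB" using Blin unfolding linear_op_on_def by blast
  have Badd: "\<And>x y. x \<in> domB \<Longrightarrow> y \<in> domB \<Longrightarrow> B (x + y) = B x + B y"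
    using Blin unfolding linear_op_on_def by blast
  have Bscale: "\<And>c x. x \<in> domB \<Longrightarrow> B (c *\<^sub>R x) = c *\<^sub>R B x"
    using Blin unfolding linear_op_on_def by blast
  have Bdiff: "\<And>x y. x \<in> domB \<Longrightarrow> y \<in> domB \<Longrightarrow> B (x - y) = B x - B y"
  proof -
    fix x y assume x: "x \<in> domB" and y: "y \<in> domB"
    have "(-1::real) *\<^sub>R y \<in> domB" using subB y by (simp add: subspace_neg)
    then have "B (x + (-1::real) *\<^sub>R y) = B x + B ((-1::real) *\<^sub>R y)"
      using Badd x by blast
    also have "B ((-1::real) *\<^sub>R y) = (-1::real) *\<^sub>R B y" using Bscale y by blast
    finally show "B (x - y) = B x - B y" by simp
  qed
  have Bnn: "\<And>x. x \<in> domB \<Longrightarrow> inner (B x) x \<ge> 0"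
  proof -
    fix x assume "x \<in> domB"
    show "inner (B x) x \<ge> 0"
    proof (cases "x = 0")
      case True then show ?thesis by simp
    next
      case False then show ?thesis using B_pos \<open>x \<in> domB\<close> unfolding positive_on_def
        by (meson less_imp_le)
    qed
  qed
  have Binj: "\<And>x y. x \<in> domB \<Longrightarrow> y \<in> domB \<Longrightarrow> B x = B y \<Longrightarrow> x = y"
  proof (rule ccontr)
    fix x y assume x: "x \<in> domB" and y: "y \<in> domB" and e: "B x = B y" and ne: "x \<noteq> y"
    have "x - y \<in> domB" using subB x y by (simp add: subspace_diff)
    moreover have "x - y \<noteq> 0" using ne by simp
    ultimately have "inner (B (x - y)) (x - y) > 0" using B_pos unfolding positive_on_def by blast
    moreover have "B (x - y) = 0" using Bdiff x y e by simp
    ultimately show False by simp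
  qed
  have inv: "\<And>g. op_inv domB B g \<in> domB \<and> B (op_inv domB B g) = g"
  proof -
    fix g
    obtain x where x: "x \<in> domB" "B x = g" using B_onto by blast
    have "(THE x. x \<in> domB \<and> B x = g) \<in> domB \<and> B (THE x. x \<in> domB \<and> B x = g) = g"
      by (rule theI[where a=x]) (use x Binj in auto)
    then show "op_inv domB B g \<in> domB \<and> B (op_inv domB B g) = g"
      unfolding op_inv_def .
  qed
  have keyineq: "\<And>q g. q \<in> domB \<Longrightarrow>
      2 * (inner g q - inner (B q) q) \<le> 1/2 * (inv_norm domB B g)\<^sup>2"
  proof -
    fix q g assume q: "q \<in> domB"
    define x where "x = op_inv domB B g"
    have x: "x \<in> domB" "B x = g" using inv x_def by auto
    have "x - 2 *\<^sub>R q \<in> domB" using subB x q by (simp add: subspace_diff subspace_scale)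
    then have "inner (B (x - 2 *\<^sub>R q)) (x - 2 *\<^sub>R q) \<ge> 0" by (rule Bnn)
    moreover have "B (x - 2 *\<^sub>R q) = B x - 2 *\<^sub>R B q"
      using Bdiff Bscale x q subB by (simp add: subspace_scale)
    ultimately have "0 \<le> inner (B x - 2 *\<^sub>R B q) (x - 2 *\<^sub>R q)" by simp
    also have "\<dots> = inner (B x) x - 2 * inner (B x) q - 2 * inner (B q) x + 4 * inner (B q) q"
      by (simp add: inner_diff_left inner_diff_right algebra_simps)
    also have "inner (B q) x = inner (B x) q"
      using Bsym[OF q x(1)] by (simp add: inner_commute)
    finally have i1: "0 \<le> inner (B x) x - 4 * inner (B x) q + 4 * inner (B q) q" by simp
    have nn: "0 \<le> inner x (B x)" using Bnn[OF x(1)] by (simp add: inner_commute)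
    have "(inv_norm domB B g)\<^sup>2 = inner x g" unfolding inv_norm_def x_def[symmetric]
      using nn x by simp
    also have "\<dots> = inner (B x) x" using x by (simp add: inner_commute)
    finally show "2 * (inner g q - inner (B q) q) \<le> 1/2 * (inv_norm domB B g)\<^sup>2"
      using i1 x by simp
  qed
  define E where "E s = inner (A (u s)) (u s) + S * inner (p s) (p s)" for s
  define E' where "E' s = (if s > 0 then 2 * (inner (f s) (p s) - inner (B (p s)) (p s)) else 0)" for s
  have Econt: "continuous_on {0..t} E"
    unfolding E_def
    by (intro continuous_intros continuous_on_subset[OF u_cont] continuous_on_subset[OF Au_cont]
        continuous_on_subset[OF p_cont]) auto
  have Ederiv: "(E has_vector_derivative E' s) (at s)" if s: "s \<in> {0<..<t}" for s
  proof -
    have s0: "s > 0" using s by simp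
    have d1: "((\<lambda>r. inner (A (u r)) (u r)) has_vector_derivative
        (inner (A (u s)) (u' s) + inner (A (u' s)) (u s))) (at s)"
      using bounded_bilinear.has_vector_derivative[OF bounded_bilinear_inner Au_deriv[rule_format, OF s0] u_deriv[rule_format, OF s0]] .
    have d2: "((\<lambda>r. inner (p r) (p r)) has_vector_derivative
        (inner (p s) (p' s) + inner (p' s) (p s))) (at s)"
      using bounded_bilinear.has_vector_derivative[OF bounded_bilinear_inner p_deriv[rule_format, OF s0] p_deriv[rule_format, OF s0]] .
    have dE: "(E has_vector_derivative
        ((inner (A (u s)) (u' s) + inner (A (u' s)) (u s)) + S * (inner (p s) (p' s) + inner (p' s) (p s)))) (at s)"
      unfolding E_def using has_vector_derivative_add[OF d1 hvd_cmul[OF d2, of S]]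
      by simp
    have us: "u s \<in> domA" "u s \<in> domD" using u_dom s0 by auto
    have u's: "u' s \<in> domA" "u' s \<in> domD" using u'_dom s0 by auto
    have ps: "p s \<in> domB" "p s \<in> domG" using p_dom s0 by auto
    have t1: "inner (A (u' s)) (u s) = inner (A (u s)) (u' s)"
      using Asym[OF u's(1) us(1)] by (simp add: inner_commute)
    have Aus: "A (u s) = - (\<alpha> *\<^sub>R G (p s))" using eq1 s0 by (simp add: eq_neg_iff_add_eq_0)
    have t2: "inner (A (u s)) (u' s) = \<alpha> * inner (D (u' s)) (p s)"
      using Aus GD_adj ps(2) u's(2) by simp
    have dsum: "((\<lambda>r. S *\<^sub>R p r + \<alpha> *\<^sub>R D (u r)) has_vector_derivative (S *\<^sub>R p' s + \<alpha> *\<^sub>R D (u' s))) (at s)"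
      by (intro has_vector_derivative_add hvd_cmul
          p_deriv[rule_format, OF s0] Du_deriv[rule_format, OF s0])
    have eqv: "S *\<^sub>R p' s + \<alpha> *\<^sub>R D (u' s) = f s - B (p s)"
      using vector_derivative_unique_at[OF dsum eq2[rule_format, OF s0]] .
    have "inner (S *\<^sub>R p' s + \<alpha> *\<^sub>R D (u' s)) (p s) = inner (f s - B (p s)) (p s)"
      using eqv by simp
    then have t3: "S * inner (p' s) (p s) + \<alpha> * inner (D (u' s)) (p s) = inner (f s) (p s) - inner (B (p s)) (p s)"
      by (simp add: inner_add_left inner_diff_left)
    have "(inner (A (u s)) (u' s) + inner (A (u' s)) (u s)) + S * (inner (p s) (p' s) + inner (p' s) (p s)) = E' s"
      unfolding E'_def using s0 t1 t2 t3 by (simp add: inner_commute algebra_simps)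
    with dE show ?thesis by simp
  qed
  have hasint: "(E' has_integral (E t - E 0)) {0..t}"
    by (rule fundamental_theorem_of_calculus_interior) (use t_pos Econt Ederiv in auto)
  have g_int: "((\<lambda>s. 1/2 * (inv_norm domB B (f s))\<^sup>2) has_integral
      (1/2 * integral {0..t} (\<lambda>s. (inv_norm domB B (f s))\<^sup>2))) {0..t}"
    using has_integral_mult_right[OF integrable_integral[OF f_int], of "1/2"] by simp
  have le: "E' s \<le> 1/2 * (inv_norm domB B (f s))\<^sup>2" if "s \<in> {0..t}" for s
  proof (cases "s > 0")
    case True
    then have "p s \<in> domB" using p_dom by auto
    then show ?thesis using keyineq True unfolding E'_def by simp
  next
    case False then show ?thesis unfolding E'_def by simp
  qed
  have "E t - E 0 \<le> 1/2 * integral {0..t} (\<lambda>s. (inv_norm domB B (f s))\<^sup>2)"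
    by (rule has_integral_le[OF hasint g_int le])
  moreover have "(op_norm A (u r))\<^sup>2 = inner (A (u r)) (u r)" if "r \<ge> 0" for r
    using A_nonneg u_dom that unfolding op_norm_def nonneg_on_def by auto
  moreover have "\<And>r. (norm (p r))\<^sup>2 = inner (p r) (p r)" by (simp add: power2_norm_eq_inner)
  ultimately show ?thesis unfolding E_def using t_pos by simp
qed

end
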